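(* Let $m\ge 2$ and let $\mu\in C^\infty(\mathbb{R}^d;\mathbb{R})$ satisfy $\sup_{x\in\mathbb{R}^d}\langle x\rangle^{|\alpha|-m}|\partial^\alpha\mu(x)|<\infty$ for every multi-index $\alpha\in\mathbb{N}^d$. Let $F_\mu(x)=e^{2\pi i\mu(x)}$ and let $g \in C^\infty_{c}(\mathbb{R}^d)$ with $\mathrm{supp}(g) \subseteq \{ y \in \mathbb{R}^d : |y|\le 1\}$. Then: (i) $|V_g F_\mu (x,\xi)| \le \|g\|_{L^1}$ for all $(x,\xi) \in \mathbb{R}^{2d}$; (ii) there exists $A>0$ such that for every $N\ge 0$ there is $C>0$ (depending on $N$) with \[ |V_g F_\mu (x,\xi)| \le C \langle \xi - \nabla \mu(x) \rangle^{-N} \quad\text{whenever}\quad |\xi-\nabla \mu(x)| \ge A |x|^{m-2}. \]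
   Context: $\langle x\rangle=(1+|x|^2)^{1/2}$. The short-time Fourier transform of $f\in\mathcal{S}'(\mathbb{R}^d)$ with window $g\in\mathcal{S}(\mathbb{R}^d)\setminus\{0\}$ is $V_gf(x,\xi)=\int_{\mathbb{R}^d} e^{-2\pi i\xi\cdot y}f(y)\overline{g(y-x)}\,dy$. *)

theory Defs
  imports "HOL-Analysis.Analysis"
begin

definition partial_deriv :: "'n::finite \<Rightarrow> (real^'n \<Rightarrow> 'a::real_normed_vector) \<Rightarrow> real^'n \<Rightarrow> 'a" where
  "partial_deriv i f x = frechet_derivative f (at x) (axis i 1)"

text \<open>Iterated partial derivatives along a list of directions; a multi-index alpha
  corresponds to any list containing each i exactly alpha(i) times, |alpha| = length.\<close>
fun pderivs :: "'n::finite list \<Rightarrow> (real^'n \<Rightarrow> 'a::real_normed_vector) \<Rightarrow> real^'n \<Rightarrow> 'a" where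
  "pderivs [] f = f"
| "pderivs (i # is) f = partial_deriv i (pderivs is f)"

definition smooth_fun :: "(real^'n::finite \<Rightarrow> 'a::real_normed_vector) \<Rightarrow> bool" where
  "smooth_fun f \<longleftrightarrow> (\<forall>is x. pderivs is f differentiable (at x))"

definition japanese :: "real^'n::finite \<Rightarrow> real" where
  "japanese x = sqrt (1 + (norm x)\<^sup>2)"

definition grad :: "(real^'n::finite \<Rightarrow> real) \<Rightarrow> real^'n \<Rightarrow> real^'n" where
  "grad f x = (\<chi> i. partial_deriv i f x)"

definition stft :: "(real^'n::finite \<Rightarrow> complex) \<Rightarrow> (real^'n \<Rightarrow> complex) \<Rightarrow> real^'n \<Rightarrow> real^'n \<Rightarrow> complex" where
  "stft g f x \<xi> = (LINT y|lborel. exp (- 2 * pi * \<i> * complex_of_real (\<xi> \<bullet> y)) * f y * cnj (g (y - x)))"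

text \<open>Real power with the convention 0^0 = 1 (Isabelle's powr has 0 powr 0 = 0).\<close>
definition rpow :: "real \<Rightarrow> real \<Rightarrow> real" where
  "rpow t a = (if t = 0 then (if a = 0 then 1 else 0) else t powr a)"

end

theory Submission
  imports Defs
begin



lemma lborel_integral_shift:
  fixes f :: "'a::euclidean_space \<Rightarrow> 'b::{banach, second_countable_topology}"
  assumes "f \<in> borel_measurable borel"
  shows "integral\<^sup>L lborel (\<lambda>y. f (y + c)) = integral\<^sup>L lborel f"
proof -
  have "integral\<^sup>L lborel f = integral\<^sup>L (distr lborel borel ((+) c)) f"
    by (simp add: lborel_distr_plus)
  also have "\<dots> = integral\<^sup>L lborel (\<lambda>y. f (c + y))"
    using assms by (intro integral_distr) auto
  finally show ?thesis by (simp add: add.commute)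
qed

lemma smooth_diff:
  assumes "smooth_fun f" shows "pderivs js f differentiable (at x)"
  using assms unfolding smooth_fun_def by blast

lemma smooth_cont:
  assumes "smooth_fun f" shows "continuous_on UNIV (pderivs js f)"
  using assms unfolding smooth_fun_def
  by (meson continuous_at_imp_continuous_on differentiable_imp_continuous_within)

lemma line_deriv:
  fixes f :: "real^'n::finite \<Rightarrow> 'a::real_normed_vector"
  assumes "smooth_fun f"
  shows "((\<lambda>t. pderivs js f (y + t *\<^sub>R axis k 1)) has_vector_derivative pderivs (k # js) f y) (at 0)"
proof -
  let ?F = "frechet_derivative (pderivs js f) (at y)"
  have d: "(pderivs js f has_derivative ?F) (at (y + 0 *\<^sub>R axis k 1))"
    using smooth_diff[OF assms, THEN frechet_derivative_works[THEN iffD1]] by simp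
  have l: "((\<lambda>t. y + t *\<^sub>R axis k 1) has_derivative (\<lambda>t. t *\<^sub>R axis k (1::real))) (at 0)"
    by (auto intro!: derivative_eq_intros)
  have "((\<lambda>t. pderivs js f (y + t *\<^sub>R axis k 1)) has_derivative (\<lambda>t. ?F (t *\<^sub>R axis k 1))) (at 0)"
    using has_derivative_compose[OF l d] by (simp add: o_def)
  moreover have "linear ?F" using d has_derivative_linear by blast
  ultimately show ?thesis
    unfolding has_vector_derivative_def
    by (simp add: linear_scale partial_deriv_def)
qed

lemma pderivs_zero:
  fixes f :: "real^'n::finite \<Rightarrow> 'a::real_normed_vector"
  assumes "smooth_fun f" "\<And>y. f y \<noteq> 0 \<Longrightarrow> norm y \<le> 1" "norm y > 1"
  shows "pderivs js f y = 0"
  using assms(3)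
proof (induction js arbitrary: y)
  case Nil then show ?case using assms(2) by force
next
  case (Cons i js)
  have "((\<lambda>_. 0) has_derivative (\<lambda>_. 0)) (at y)" by simp
  then have "(pderivs js f has_derivative (\<lambda>_. 0)) (at y)"
    by (rule has_derivative_transform_within_open[where s="- cball 0 1"])
       (use Cons in \<open>auto simp: dist_norm\<close>)
  then have "frechet_derivative (pderivs js f) (at y) = (\<lambda>_. 0)"
    by (metis frechet_derivative_at)
  then show ?case by (simp add: partial_deriv_def)
qed

lemma pderivs_bounded:
  fixes f :: "real^'n::finite \<Rightarrow> 'a::real_normed_vector"
  assumes "smooth_fun f" "\<And>y. f y \<noteq> 0 \<Longrightarrow> norm y \<le> 1"
  shows "\<exists>C. \<forall>y. norm (pderivs js f y) \<le> C"
proof -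
  have "compact (pderivs js f ` cball 0 1)"
    using smooth_cont[OF assms(1)] by (intro compact_continuous_image) (auto intro: continuous_on_subset)
  then obtain C where C: "\<And>z. z \<in> pderivs js f ` cball 0 1 \<Longrightarrow> norm z \<le> C"
    using compact_imp_bounded bounded_iff by metis
  show ?thesis
  proof (intro exI[of _ "max C 0"] allI)
    fix y show "norm (pderivs js f y) \<le> max C 0"
      using C[of "pderivs js f y"] pderivs_zero[OF assms, of y js] by (cases "norm y \<le> 1") auto
  qed
qed




datatype ex = Gd nat | Bd nat | Inv | Cst complex | Add ex ex | Mul ex ex

fun ev :: "(nat \<Rightarrow> 'a \<Rightarrow> complex) \<Rightarrow> (nat \<Rightarrow> 'a \<Rightarrow> complex) \<Rightarrow> ex \<Rightarrow> 'a \<Rightarrow> complex" where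
  "ev G B (Gd r) y = G r y"
| "ev G B (Bd r) y = B r y"
| "ev G B Inv y = inverse (B 0 y)"
| "ev G B (Cst c) y = c"
| "ev G B (Add e f) y = ev G B e y + ev G B f y"
| "ev G B (Mul e f) y = ev G B e y * ev G B f y"

fun dx :: "ex \<Rightarrow> ex" where
  "dx (Gd r) = Gd (Suc r)"
| "dx (Bd r) = Bd (Suc r)"
| "dx Inv = Mul (Cst (-1)) (Mul (Bd 1) (Mul Inv Inv))"
| "dx (Cst c) = Cst 0"
| "dx (Add e f) = Add (dx e) (dx f)"
| "dx (Mul e f) = Add (Mul (dx e) f) (Mul e (dx f))"

fun hasG :: "ex \<Rightarrow> bool" where
  "hasG (Gd r) = True"
| "hasG (Bd r) = False"
| "hasG Inv = False"
| "hasG (Cst c) = (c = 0)"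
| "hasG (Add e f) = (hasG e \<and> hasG f)"
| "hasG (Mul e f) = (hasG e \<or> hasG f)"

fun bnd :: "(nat \<Rightarrow> real) \<Rightarrow> (nat \<Rightarrow> real) \<Rightarrow> real \<Rightarrow> ex \<Rightarrow> real" where
  "bnd CG CB c (Gd r) = CG r"
| "bnd CG CB c (Bd r) = CB r"
| "bnd CG CB c Inv = 1 / c"
| "bnd CG CB c (Cst a) = norm a"
| "bnd CG CB c (Add e f) = bnd CG CB c e + bnd CG CB c f"
| "bnd CG CB c (Mul e f) = bnd CG CB c e * bnd CG CB c f"

lemma hasG_dx: "hasG e \<Longrightarrow> hasG (dx e)"
  by (induction e) auto

lemma hasG_ev: "hasG e \<Longrightarrow> (\<And>r. G r y = 0) \<Longrightarrow> ev G B e y = 0"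
  by (induction e) auto

lemma ev_bound:
  assumes "\<And>r. norm (G r y) \<le> CG r" "\<And>r. norm (B r y) \<le> CB r" "norm (B 0 y) \<ge> c" "c > 0"
  shows "norm (ev G B e y) \<le> bnd CG CB c e"
proof (induction e)
  case Inv
  have "norm (inverse (B 0 y)) = 1 / norm (B 0 y)" by (simp add: norm_inverse divide_inverse)
  also have "\<dots> \<le> 1 / c" using assms(3,4) by (intro divide_left_mono) (auto intro!: mult_pos_pos)
  finally show ?case by simp
next
  case (Add e f) then show ?case by (simp add: norm_triangle_le)
next
  case (Mul e f) then show ?case
    by (simp add: norm_mult mult_mono' order_trans[OF norm_ge_zero])
qed (use assms in auto)

lemma ev_cont:
  assumes "\<And>r. isCont (G r) y" "\<And>r. isCont (B r) y" "B 0 y \<noteq> 0"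
  shows "isCont (ev G B e) y"
proof (induction e)
  case Inv show ?case using assms(2)[of 0] assms(3) by (simp add: continuous_at_within_inverse)
qed (use assms in \<open>auto intro: continuous_intros\<close>)

lemma ev_deriv:
  fixes e0 :: "'a::real_normed_vector"
  assumes "\<And>r. ((\<lambda>t. G r (y + t *\<^sub>R e0)) has_vector_derivative G (Suc r) y) (at 0)"
    "\<And>r. ((\<lambda>t. B r (y + t *\<^sub>R e0)) has_vector_derivative B (Suc r) y) (at 0)"
    "B 0 y \<noteq> 0"
  shows "((\<lambda>t. ev G B e (y + t *\<^sub>R e0)) has_vector_derivative ev G B (dx e) y) (at 0)"
proof (induction e)
  case Inv
  have d: "((\<lambda>t. B 0 (y + t *\<^sub>R e0)) has_derivative (\<lambda>h. h *\<^sub>R B 1 y)) (at 0)"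
    using assms(2)[of 0] by (simp add: has_vector_derivative_def)
  have "((\<lambda>t. inverse (B 0 (y + t *\<^sub>R e0))) has_derivative (\<lambda>h. - (inverse (B 0 (y + 0 *\<^sub>R e0)) * (h *\<^sub>R B 1 y) * inverse (B 0 (y + 0 *\<^sub>R e0))))) (at 0)"
    using has_derivative_compose[OF d has_derivative_inverse'[of "B 0 (y + 0 *\<^sub>R e0)" UNIV]] assms(3) by simp
  then have "((\<lambda>t. inverse (B 0 (y + t *\<^sub>R e0))) has_vector_derivative
          - (inverse (B 0 y) * B 1 y * inverse (B 0 y))) (at 0)"
    unfolding has_vector_derivative_def by (simp add: scaleR_conv_of_real mult_ac)
  then show ?case by (simp add: algebra_simps)
next
  case (Add e f) then show ?case by (auto intro: derivative_eq_intros)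
next
  case (Mul e f) then show ?case by (auto intro!: derivative_eq_intros simp: algebra_simps)
qed (use assms in auto)




lemma cont_supp_integrable:
  fixes f :: "'a::euclidean_space \<Rightarrow> 'b::{banach, second_countable_topology}"
  assumes "continuous_on UNIV f" "\<And>y. y \<notin> cball c R \<Longrightarrow> f y = 0"
  shows "integrable lborel f"
proof -
  have "integrable lborel (\<lambda>x. indicator (cball c R) x *\<^sub>R f x)"
    using assms(1) by (intro borel_integrable_compact) (auto intro: continuous_on_subset)
  moreover have "(\<lambda>x. indicator (cball c R) x *\<^sub>R f x) = f"
    using assms(2) by (auto simp: fun_eq_iff indicator_def)
  ultimately show ?thesis by simp
qed

lemma cont_supp_bounded:
  fixes f :: "'a::euclidean_space \<Rightarrow> 'b::real_normed_vector"
  assumes "continuous_on UNIV f" "\<And>y. y \<notin> cball c R \<Longrightarrow> f y = 0"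
  shows "\<exists>M\<ge>0. \<forall>y. norm (f y) \<le> M"
proof -
  have "compact (f ` cball c R)"
    using assms(1) by (intro compact_continuous_image) (auto intro: continuous_on_subset)
  then obtain C where C: "\<And>z. z \<in> f ` cball c R \<Longrightarrow> norm z \<le> C"
    using compact_imp_bounded bounded_iff by metis
  show ?thesis
  proof (intro exI[of _ "max C 0"] conjI allI)
    fix y show "norm (f y) \<le> max C 0"
      using C[of "f y"] assms(2)[of y] by (cases "y \<in> cball c R") auto
  qed auto
qed

lemma vd_seq:
  fixes g :: "real \<Rightarrow> 'b::real_normed_vector"
  assumes "(g has_vector_derivative v) (at 0)"
  shows "(\<lambda>n. real (Suc n) *\<^sub>R (g (1 / real (Suc n)) - g 0)) \<longlonglongrightarrow> v"
proof -
  have "((\<lambda>h. norm (g (0 + h) - g 0 - h *\<^sub>R v) / norm h) \<longlongrightarrow> 0) (at 0)"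
    using assms unfolding has_vector_derivative_def has_derivative_at by blast
  moreover have "filterlim (\<lambda>n. 1 / real (Suc n)) (at 0) sequentially"
    unfolding filterlim_at using LIMSEQ_inverse_real_of_nat
    by (auto simp: inverse_eq_divide)
  ultimately have "(\<lambda>n. norm (g (1 / real (Suc n)) - g 0 - (1 / real (Suc n)) *\<^sub>R v) / norm (1 / real (Suc n))) \<longlonglongrightarrow> 0"
    using filterlim_compose by fastforce
  moreover have "norm (g (1 / real (Suc n)) - g 0 - (1 / real (Suc n)) *\<^sub>R v) / norm (1 / real (Suc n))
      = norm (real (Suc n) *\<^sub>R (g (1 / real (Suc n)) - g 0) - v)" for n
  proof -
    have "real (Suc n) *\<^sub>R (g (1 / real (Suc n)) - g 0) - v
        = real (Suc n) *\<^sub>R (g (1 / real (Suc n)) - g 0 - (1 / real (Suc n)) *\<^sub>R v)"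
      by (simp add: algebra_simps)
    then show ?thesis by (simp add: divide_inverse)
  qed
  ultimately have "(\<lambda>n. norm (real (Suc n) *\<^sub>R (g (1 / real (Suc n)) - g 0) - v)) \<longlonglongrightarrow> 0"
    by simp
  then show ?thesis
    using tendsto_norm_zero_iff LIM_zero_cancel by blast
qed

lemma vd_shift:
  fixes h h' :: "'a::real_normed_vector \<Rightarrow> 'b::real_normed_vector"
  assumes "\<And>y. ((\<lambda>t. h (y + t *\<^sub>R e)) has_vector_derivative h' y) (at 0)"
  shows "((\<lambda>t. h (y + t *\<^sub>R e)) has_vector_derivative h' (y + t0 *\<^sub>R e)) (at t0)"
proof -
  have a: "((\<lambda>t. t - t0) has_vector_derivative 1) (at t0)"
    by (auto intro!: derivative_eq_intros)
  have b: "((\<lambda>s. h ((y + t0 *\<^sub>R e) + s *\<^sub>R e)) has_vector_derivative h' (y + t0 *\<^sub>R e)) (at ((\<lambda>t. t - t0) t0))"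
    using assms[of "y + t0 *\<^sub>R e"] by simp
  have "((\<lambda>s. h ((y + t0 *\<^sub>R e) + s *\<^sub>R e)) \<circ> (\<lambda>t. t - t0)) = (\<lambda>t. h (y + t *\<^sub>R e))"
    by (auto simp: fun_eq_iff algebra_simps)
  with vector_diff_chain_at[OF a b] show ?thesis by simp
qed

lemma ibp_zero:
  fixes h h' :: "real^'n::finite \<Rightarrow> complex"
  assumes der: "\<And>y. ((\<lambda>t. h (y + t *\<^sub>R e)) has_vector_derivative h' y) (at 0)"
    and ch: "continuous_on UNIV h" and ch': "continuous_on UNIV h'"
    and supp: "\<And>y. y \<notin> cball c R \<Longrightarrow> h y = 0"
    and supp': "\<And>y. y \<notin> cball c R \<Longrightarrow> h' y = 0"
  shows "integral\<^sup>L lborel h' = 0"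
proof -
  obtain M where M: "M \<ge> 0" "\<And>y. norm (h' y) \<le> M"
    using cont_supp_bounded[OF ch' supp'] by blast
  define s where "s n y = real (Suc n) *\<^sub>R (h (y + (1 / real (Suc n)) *\<^sub>R e) - h y)" for n y
  define w where "w y = M * indicator (cball c (R + norm e)) y" for y
  have hm: "h \<in> borel_measurable borel" by (rule borel_measurable_continuous_onI[OF ch])
  have cs: "continuous_on UNIV (\<lambda>y. h (y + t *\<^sub>R e))" for t
    by (intro continuous_on_compose2[OF ch]) (auto intro!: continuous_intros)
  have int_h: "integrable lborel h" by (rule cont_supp_integrable[OF ch supp])
  have int_ht: "integrable lborel (\<lambda>y. h (y + t *\<^sub>R e))" for t
  proof (rule cont_supp_integrable[OF cs, of "c - t *\<^sub>R e" R])
    fix y assume "y \<notin> cball (c - t *\<^sub>R e) R"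
    then have "y + t *\<^sub>R e \<notin> cball c R" by (auto simp: dist_norm algebra_simps)
    then show "h (y + t *\<^sub>R e) = 0" by (rule supp)
  qed
  have s0: "integral\<^sup>L lborel (s n) = 0" for n
  proof -
    have "integral\<^sup>L lborel (s n) = real (Suc n) *\<^sub>R (integral\<^sup>L lborel (\<lambda>y. h (y + (1 / real (Suc n)) *\<^sub>R e)) - integral\<^sup>L lborel h)"
      unfolding s_def using int_h int_ht by simp
    also have "integral\<^sup>L lborel (\<lambda>y. h (y + (1 / real (Suc n)) *\<^sub>R e)) = integral\<^sup>L lborel h"
      by (rule lborel_integral_shift[OF hm])
    finally show ?thesis by simp
  qed
  have lim: "(\<lambda>n. s n y) \<longlonglongrightarrow> h' y" for y
    unfolding s_def using vd_seq[OF der[of y]] by simp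
  have bound: "norm (s n y) \<le> w y" for n y
  proof (cases "y \<in> cball c (R + norm e)")
    case True
    let ?t = "1 / real (Suc n)"
    have "norm (h (y + ?t *\<^sub>R e) - h (y + 0 *\<^sub>R e)) \<le> M * norm (?t - 0)"
    proof (rule differentiable_bound[where S="{0..?t}" and f="\<lambda>t. h (y + t *\<^sub>R e)"
          and f'="\<lambda>t x. x *\<^sub>R h' (y + t *\<^sub>R e)"])
      fix x assume "x \<in> {0..?t}"
      show "((\<lambda>t. h (y + t *\<^sub>R e)) has_derivative (\<lambda>z. z *\<^sub>R h' (y + x *\<^sub>R e))) (at x within {0..?t})"
        using vd_shift[OF der, of y x] unfolding has_vector_derivative_def
        by (rule has_derivative_at_withinI)
      show "onorm (\<lambda>z. z *\<^sub>R h' (y + x *\<^sub>R e)) \<le> M"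
        using M by (intro onorm_bound) (auto simp: mult.commute[of M] intro!: mult_left_mono)
    qed auto
    then have "norm (h (y + ?t *\<^sub>R e) - h y) \<le> M * ?t" by simp
    then have "real (Suc n) * norm (h (y + ?t *\<^sub>R e) - h y) \<le> real (Suc n) * (M * ?t)"
      by (intro mult_left_mono) auto
    then have "norm (s n y) \<le> M"
      unfolding s_def by simp
    then show ?thesis using True by (simp add: w_def)
  next
    case False
    have "y \<notin> cball c R" using False norm_ge_zero[of e] unfolding mem_cball by linarith
    moreover have "y + (1 / real (Suc n)) *\<^sub>R e \<notin> cball c R"
    proof
      assume "y + (1 / real (Suc n)) *\<^sub>R e \<in> cball c R"
      then have "dist c y \<le> R + norm ((1 / real (Suc n)) *\<^sub>R e)"
        using dist_triangle[of c y "y + (1 / real (Suc n)) *\<^sub>R e"] by (simp add: dist_norm)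
      also have "norm ((1 / real (Suc n)) *\<^sub>R e) \<le> norm e"
        by (simp add: divide_le_eq algebra_simps)
      finally show False using False by auto
    qed
    ultimately show ?thesis using False supp by (simp add: s_def w_def)
  qed
  have "(\<lambda>n. integral\<^sup>L lborel (s n)) \<longlonglongrightarrow> integral\<^sup>L lborel h'"
  proof (rule integral_dominated_convergence[where w=w])
    show "h' \<in> borel_measurable lborel" using borel_measurable_continuous_onI[OF ch'] by simp
    show "s n \<in> borel_measurable lborel" for n
      using Bochner_Integration.integrable_diff[OF int_ht int_h] unfolding s_def
      by (intro borel_measurable_integrable integrable_scaleR_right) auto
    show "integrable lborel w" unfolding w_def
      by (intro integrable_mult_right integrable_real_indicator) (use emeasure_compact_finite[of "cball c (R + norm e)"] in \<open>auto simp: less_top\<close>)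
    show "AE y in lborel. (\<lambda>n. s n y) \<longlonglongrightarrow> h' y" using lim by simp
    show "AE y in lborel. norm (s n y) \<le> w y" for n using bound by simp
  qed
  then show ?thesis using s0 LIMSEQ_unique by (simp add: LIMSEQ_const_iff)
qed




definition stepE :: "ex \<Rightarrow> ex" where
  "stepE E = Mul (Cst (- 1 / (2 * pi * \<i>))) (dx (Mul E Inv))"

fun Es :: "nat \<Rightarrow> ex" where
  "Es 0 = Gd 0"
| "Es (Suc j) = stepE (Es j)"

lemma hasG_Es: "hasG (Es j)"
  by (induction j) (auto simp: stepE_def intro!: hasG_dx)

locale ibp_setting =
  fixes u :: "real^'n::finite \<Rightarrow> complex" and G B :: "nat \<Rightarrow> real^'n \<Rightarrow> complex"
    and x e :: "real^'n" and s :: real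
  assumes uder: "\<And>y. ((\<lambda>t. u (y + t *\<^sub>R e)) has_vector_derivative u y * (2 * pi * \<i> * of_real s * B 0 y)) (at 0)"
    and ucont: "continuous_on UNIV u"
    and Gder: "\<And>r y. ((\<lambda>t. G r (y + t *\<^sub>R e)) has_vector_derivative G (Suc r) y) (at 0)"
    and Bder: "\<And>r y. ((\<lambda>t. B r (y + t *\<^sub>R e)) has_vector_derivative B (Suc r) y) (at 0)"
    and Gcont: "\<And>r. continuous_on UNIV (G r)"
    and Bcont: "\<And>r. continuous_on UNIV (B r)"
    and Gsupp: "\<And>r y. y \<notin> cball x 1 \<Longrightarrow> G r y = 0"
    and Bnz: "\<And>y. y \<in> ball x 2 \<Longrightarrow> B 0 y \<noteq> 0"
    and snz: "s \<noteq> 0"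
begin

lemma ev_zero: "hasG E \<Longrightarrow> y \<notin> cball x 1 \<Longrightarrow> ev G B E y = 0"
  by (rule hasG_ev) (auto simp: Gsupp)

lemma cont_glob:
  assumes "hasG E"
  shows "continuous_on UNIV (\<lambda>y. u y * ev G B E y * c)"
proof -
  have "continuous_on (ball x 2) (\<lambda>y. u y * ev G B E y * c)"
  proof (intro continuous_at_imp_continuous_on ballI)
    fix y assume "y \<in> ball x 2"
    then have "isCont (ev G B E) y"
      using Bnz Gcont Bcont by (intro ev_cont) (auto simp: continuous_on_eq_continuous_at)
    then show "isCont (\<lambda>y. u y * ev G B E y * c) y"
      using ucont by (auto intro!: continuous_intros simp: continuous_on_eq_continuous_at)
  qed
  moreover have "continuous_on (- cball x 1) (\<lambda>y. u y * ev G B E y * c)"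
    by (rule continuous_on_eq[where f="\<lambda>_. 0"]) (auto simp: ev_zero[OF assms])
  moreover have "ball x 2 \<union> - cball x 1 = UNIV" by auto
  ultimately show ?thesis
    using continuous_on_open_Un[of "ball x 2" "- cball x 1"] by auto
qed

lemma integrable_glob:
  assumes "hasG E"
  shows "integrable lborel (\<lambda>y. u y * ev G B E y)"
  using cont_supp_integrable[OF cont_glob[OF assms, of 1], of x 1] ev_zero[OF assms] by simp

lemma step:
  assumes "hasG E"
  shows "integral\<^sup>L lborel (\<lambda>y. u y * ev G B E y)
       = (1 / s) * integral\<^sup>L lborel (\<lambda>y. u y * ev G B (stepE E) y)"
proof -
  let ?c = "1 / (2 * pi * \<i> * of_real s)"
  define h where "h y = u y * ev G B (Mul E Inv) y * ?c" for y
  define h' where "h' y = u y * ev G B E y * 1 - u y * ev G B (stepE E) y * (1 / of_real s)" for y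
  have hG: "hasG (Mul E Inv)" "hasG (stepE E)"
    using assms by (auto simp: stepE_def intro!: hasG_dx)
  have "integral\<^sup>L lborel h' = 0"
  proof (rule ibp_zero[where e=e and c=x and R=1])
    show "continuous_on UNIV h" unfolding h_def by (rule cont_glob[OF hG(1)])
    show "continuous_on UNIV h'" unfolding h'_def
      by (intro continuous_on_diff cont_glob hG assms)
    show "h y = 0" if "y \<notin> cball x 1" for y using ev_zero[OF hG(1) that] by (simp add: h_def)
    show "h' y = 0" if "y \<notin> cball x 1" for y
      using ev_zero[OF hG(2) that] ev_zero[OF assms that] by (simp add: h'_def)
    show "((\<lambda>t. h (y + t *\<^sub>R e)) has_vector_derivative h' y) (at 0)" for y
    proof (cases "y \<in> ball x 2")
      case True
      have d: "((\<lambda>t. ev G B (Mul E Inv) (y + t *\<^sub>R e)) has_vector_derivative ev G B (dx (Mul E Inv)) y) (at 0)"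
        using Gder Bder Bnz[OF True] by (rule ev_deriv)
      have "((\<lambda>t. u (y + t *\<^sub>R e) * ev G B (Mul E Inv) (y + t *\<^sub>R e) * ?c) has_vector_derivative
          (u (y + 0 *\<^sub>R e) * ev G B (dx (Mul E Inv)) y + u y * (2 * pi * \<i> * of_real s * B 0 y) * ev G B (Mul E Inv) (y + 0 *\<^sub>R e)) * ?c) (at 0)"
        by (intro has_vector_derivative_mult_left has_vector_derivative_mult uder d)
      moreover have "(u (y + 0 *\<^sub>R e) * ev G B (dx (Mul E Inv)) y + u y * (2 * pi * \<i> * of_real s * B 0 y) * ev G B (Mul E Inv) (y + 0 *\<^sub>R e)) * ?c = h' y"
        using Bnz[OF True] snz by (simp add: h'_def stepE_def field_simps)
      ultimately show ?thesis unfolding h_def by simp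
    next
      case False
      then have y: "y \<notin> cball x 1" by auto
      have o: "open ((\<lambda>t. y + t *\<^sub>R e) -` (- cball x 1))"
        by (intro open_vimage) (auto intro!: continuous_intros)
      have "((\<lambda>t. 0) has_vector_derivative 0) (at (0::real))" by simp
      then have "((\<lambda>t. h (y + t *\<^sub>R e)) has_vector_derivative 0) (at 0)"
        by (rule has_vector_derivative_transform_within_open[OF _ o])
           (use y in \<open>auto simp: h_def ev_zero[OF assms]\<close>)
      moreover have "h' y = 0"
        using ev_zero[OF hG(2) y] ev_zero[OF assms y] by (simp add: h'_def)
      ultimately show ?thesis by simp
    qed
  qed
  moreover have "integral\<^sup>L lborel h' = integral\<^sup>L lborel (\<lambda>y. u y * ev G B E y)
      - (1 / s) * integral\<^sup>L lborel (\<lambda>y. u y * ev G B (stepE E) y)"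
    unfolding h'_def using integrable_glob[OF assms] integrable_glob[OF hG(2)]
    by (simp add: integral_mult_left_zero)
  ultimately show ?thesis by simp
qed

lemma iterate:
  "integral\<^sup>L lborel (\<lambda>y. u y * ev G B (Es 0) y)
       = (1 / s) ^ j * integral\<^sup>L lborel (\<lambda>y. u y * ev G B (Es j) y)"
proof (induction j)
  case (Suc j)
  show ?case using Suc step[OF hasG_Es[of j]] by simp
qed simp

end




lemma jap_ge1: "japanese x \<ge> 1"
  unfolding japanese_def by simp

lemma jap_pos: "japanese x > 0"
  using jap_ge1[of x] by linarith

lemma jap_le: "japanese x \<le> 1 + norm x"
proof -
  have "1 + (norm x)\<^sup>2 \<le> (1 + norm x)\<^sup>2" by (simp add: power2_eq_square algebra_simps)
  then have "sqrt (1 + (norm x)\<^sup>2) \<le> sqrt ((1 + norm x)\<^sup>2)" by (rule real_sqrt_le_mono)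
  then show ?thesis unfolding japanese_def by simp
qed

lemma norm_le_jap: "norm x \<le> japanese x"
  unfolding japanese_def by (simp add: real_le_rsqrt)

lemma jap_shift: "norm (z - x) \<le> 2 \<Longrightarrow> japanese z \<le> 6 * japanese x"
proof -
  assume a: "norm (z - x) \<le> 2"
  have "norm z \<le> norm x + 2" using a norm_triangle_sub[of z x] by linarith
  then show ?thesis using jap_le[of z] norm_le_jap[of x] jap_ge1[of x] by linarith
qed

lemma linear_expand:
  fixes F :: "real^'n::finite \<Rightarrow> real"
  assumes "linear F"
  shows "F v = (\<Sum>i\<in>UNIV. v $ i * F (axis i 1))"
proof -
  have "F v = F (\<Sum>i\<in>UNIV. v $ i *\<^sub>R axis i 1)"
    using basis_expansion[of v] by (simp add: scalar_mult_eq_scaleR)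
  also have "\<dots> = (\<Sum>i\<in>UNIV. v $ i * F (axis i 1))"
    using assms by (simp add: linear_sum linear_scale)
  finally show ?thesis .
qed

lemma pderiv_bound_from:
  assumes "japanese x powr (real (length js) - m) * \<bar>p\<bar> \<le> B"
  shows "\<bar>p\<bar> \<le> B * japanese x powr (m - real (length js))"
proof -
  have "\<bar>p\<bar> = japanese x powr (m - real (length js)) * (japanese x powr (real (length js) - m) * \<bar>p\<bar>)"
    using jap_pos[of x] by (simp add: powr_add[symmetric])
  also have "\<dots> \<le> japanese x powr (m - real (length js)) * B"
    using assms by (intro mult_left_mono) auto
  finally show ?thesis by (simp add: mult.commute)
qed

locale P32 =
  fixes m :: real and \<mu> :: "real^'n::finite \<Rightarrow> real" and g :: "real^'n \<Rightarrow> complex"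
    and Bf :: "'n list \<Rightarrow> real" and Cgf :: "'n list \<Rightarrow> real"
  assumes hm: "m \<ge> 2"
    and smu: "smooth_fun \<mu>"
    and Bf: "\<And>js x. \<bar>pderivs js \<mu> x\<bar> \<le> Bf js * japanese x powr (m - real (length js))"
    and sg: "smooth_fun g"
    and gsupp: "\<And>y. g y \<noteq> 0 \<Longrightarrow> norm y \<le> 1"
    and Cgf: "\<And>js y. norm (pderivs js g y) \<le> Cgf js"
begin

lemma Bf_nonneg: "Bf js \<ge> 0"
proof -
  have "0 \<le> Bf js * japanese (0::real^'n) powr (m - real (length js))"
    using Bf[of js 0] abs_ge_zero[of "pderivs js \<mu> 0"] by linarith
  then show ?thesis using jap_pos[of "0::real^'n"] by (simp add: zero_le_mult_iff)
qed

definition B2 where "B2 = (\<Sum>i\<in>UNIV. \<Sum>k\<in>UNIV. Bf [i, k])"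
definition K where "K = 2 * (real CARD('n) * B2) * 6 powr (m - 2)"

lemma K_nonneg: "K \<ge> 0"
  unfolding K_def B2_def by (auto intro!: mult_nonneg_nonneg sum_nonneg Bf_nonneg)

lemma mvt:
  assumes "z \<in> ball x 2"
  shows "\<bar>partial_deriv k \<mu> z - partial_deriv k \<mu> x\<bar> \<le> K * japanese x powr (m - 2)"
proof -
  let ?f = "partial_deriv k \<mu>"
  let ?F = "\<lambda>w. frechet_derivative ?f (at w)"
  have fd: "?f = pderivs [k] \<mu>" by simp
  have der: "(?f has_derivative ?F w) (at w within ball x 2)" for w
  proof -
    have "(pderivs [k] \<mu> has_derivative frechet_derivative (pderivs [k] \<mu>) (at w)) (at w)"
      using smooth_diff[OF smu, of "[k]" w, THEN frechet_derivative_works[THEN iffD1]] .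
    then show ?thesis by (simp add: has_derivative_at_withinI)
  qed
  have Fb: "onorm (?F w) \<le> real CARD('n) * B2 * (6 * japanese x) powr (m - 2)" if w: "w \<in> ball x 2" for w
  proof (rule onorm_bound)
    show "0 \<le> real CARD('n) * B2 * (6 * japanese x) powr (m - 2)"
      unfolding B2_def by (auto intro!: sum_nonneg Bf_nonneg mult_nonneg_nonneg)
    fix v :: "real^'n"
    have lin: "linear (?F w)" using der[of w] has_derivative_linear by blast
    have jw: "japanese w powr (m - 2) \<le> (6 * japanese x) powr (m - 2)"
      using jap_shift[of w x] w hm jap_pos[of w] by (intro powr_mono2) (auto simp: dist_norm norm_minus_commute)
    have "\<bar>?F w v\<bar> = \<bar>\<Sum>i\<in>UNIV. v $ i * ?F w (axis i 1)\<bar>" by (rule arg_cong[OF linear_expand[OF lin]])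
    also have "\<dots> \<le> (\<Sum>i\<in>UNIV. \<bar>v $ i\<bar> * \<bar>?F w (axis i 1)\<bar>)"
      by (rule order_trans[OF sum_abs]) (simp add: abs_mult)
    also have "\<dots> \<le> (\<Sum>(i::'n)\<in>UNIV. norm v * (B2 * (6 * japanese x) powr (m - 2)))"
    proof (rule sum_mono)
      fix i :: 'n
      have B2i: "Bf [i, k] \<le> B2"
      proof -
        have "Bf [i, k] \<le> (\<Sum>k'\<in>UNIV. Bf [i, k'])"
          by (rule member_le_sum) (auto intro: Bf_nonneg)
        also have "\<dots> \<le> B2" unfolding B2_def
          by (rule member_le_sum[of i UNIV "\<lambda>i. \<Sum>k'\<in>UNIV. Bf [i, k']"]) (auto intro!: sum_nonneg Bf_nonneg)
        finally show ?thesis .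
      qed
      have "?F w (axis i 1) = pderivs [i, k] \<mu> w" by (simp add: partial_deriv_def)
      then have "\<bar>?F w (axis i 1)\<bar> \<le> Bf [i, k] * japanese w powr (m - 2)"
        using Bf[of "[i, k]" w] by simp
      also have "\<dots> \<le> Bf [i, k] * (6 * japanese x) powr (m - 2)"
        using jw Bf_nonneg by (intro mult_left_mono) auto
      also have "\<dots> \<le> B2 * (6 * japanese x) powr (m - 2)"
        using B2i by (intro mult_right_mono) auto
      finally have Fi: "\<bar>?F w (axis i 1)\<bar> \<le> B2 * (6 * japanese x) powr (m - 2)" .
      have "0 \<le> B2" using B2i Bf_nonneg[of "[i,k]"] by linarith
      then show "\<bar>v $ i\<bar> * \<bar>?F w (axis i 1)\<bar> \<le> norm v * (B2 * (6 * japanese x) powr (m - 2))"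
        using Fi component_le_norm_cart[of v i] by (intro mult_mono) auto
    qed
    also have "\<dots> = real CARD('n) * B2 * (6 * japanese x) powr (m - 2) * norm v" by simp
    finally show "norm (?F w v) \<le> real CARD('n) * B2 * (6 * japanese x) powr (m - 2) * norm v" by simp
  qed
  have "norm (?f z - ?f x) \<le> real CARD('n) * B2 * (6 * japanese x) powr (m - 2) * norm (z - x)"
    by (rule differentiable_bound[OF convex_ball der Fb assms]) auto
  also have "\<dots> \<le> real CARD('n) * B2 * (6 * japanese x) powr (m - 2) * 2"
    using assms by (intro mult_left_mono) (auto simp: dist_norm norm_minus_commute B2_def intro!: sum_nonneg Bf_nonneg mult_nonneg_nonneg)
  also have "\<dots> = K * japanese x powr (m - 2)"
    unfolding K_def using jap_pos[of x] by (simp add: powr_mult)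
  finally show ?thesis by simp
qed

end



context P32 begin

definition L where "L = 2 * real CARD('n) * K + 1"
definition CG where "CG r = (\<Sum>k\<in>UNIV. Cgf (replicate r k))"
definition CB where "CB r = (if r = 0 then 2 else (\<Sum>k\<in>UNIV. Bf (replicate (Suc r) k)) * 6 powr (m - 2))"
definition cc where "cc = 1 / (2 * real CARD('n))"
definition vol where "vol = integral\<^sup>L lborel (indicator (cball (0::real^'n) 1) :: real^'n \<Rightarrow> real)"

lemma mu_cont: "continuous_on UNIV \<mu>"
  using smooth_cont[OF smu, of "[]"] by simp

lemma main_est:
  fixes x \<xi> :: "real^'n"
  assumes sL: "norm (\<xi> - grad \<mu> x) \<ge> L * japanese x powr (m - 2)"
    and spos: "norm (\<xi> - grad \<mu> x) > 0"
  shows "norm (stft g (\<lambda>y. exp (2 * pi * \<i> * complex_of_real (\<mu> y))) x \<xi>)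
           \<le> (1 / norm (\<xi> - grad \<mu> x)) ^ j * (bnd CG CB cc (Es j) * vol)"
proof -
  define \<eta> where "\<eta> = \<xi> - grad \<mu> x"
  define s where "s = norm \<eta>"
  define D where "D = real CARD('n)"
  define J where "J = japanese x powr (m - 2)"
  have D1: "D \<ge> 1" unfolding D_def by (simp add: Suc_le_eq)
  have J0: "J \<ge> 0" unfolding J_def by simp
  have s0: "s > 0" using spos by (simp add: s_def \<eta>_def)
  obtain k where k: "\<And>i. \<bar>\<eta> $ i\<bar> \<le> \<bar>\<eta> $ k\<bar>"
  proof -
    have "finite ((\<lambda>i. \<bar>\<eta> $ i\<bar>) ` UNIV)" by simp
    have "Max ((\<lambda>i. \<bar>\<eta> $ i\<bar>) ` UNIV) \<in> (\<lambda>i. \<bar>\<eta> $ i\<bar>) ` UNIV"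
      by (rule Max_in) auto
    then obtain k where kk: "Max ((\<lambda>i. \<bar>\<eta> $ i\<bar>) ` UNIV) = \<bar>\<eta> $ k\<bar>"
      by blast
    have "\<bar>\<eta> $ i\<bar> \<le> \<bar>\<eta> $ k\<bar>" for i
      unfolding kk[symmetric] by (rule Max_ge) auto
    then show ?thesis by (rule that)
  qed
  have sk: "s \<le> D * \<bar>\<eta> $ k\<bar>"
  proof -
    have "s \<le> (\<Sum>i\<in>UNIV. \<bar>\<eta> $ i\<bar>)" unfolding s_def by (rule norm_le_l1_cart)
    also have "\<dots> \<le> (\<Sum>i\<in>(UNIV::'n set). \<bar>\<eta> $ k\<bar>)" by (intro sum_mono k)
    finally show ?thesis by (simp add: D_def)
  qed
  have etak: "\<bar>\<eta> $ k\<bar> \<le> s" unfolding s_def by (rule component_le_norm_cart)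
  have sLJ: "s \<ge> (2 * D * K + 1) * J" using sL by (simp add: s_def \<eta>_def L_def D_def J_def)
  have KJ: "K * J \<le> s / (2 * D)"
  proof -
    have "2 * D * (K * J) \<le> s" using sLJ J0 by (simp add: algebra_simps)
    then show ?thesis using D1 by (simp add: field_simps)
  qed
  have Js: "J \<le> s"
  proof -
    have "0 \<le> 2 * D * K * J" using K_nonneg J0 D1 by simp
    then have "J \<le> (2 * D * K + 1) * J" by (simp add: algebra_simps)
    then show ?thesis using sLJ by linarith
  qed
  define a where "a y = partial_deriv k \<mu> y - \<xi> $ k" for y
  have ax: "a x = - \<eta> $ k" by (simp add: a_def \<eta>_def grad_def)
  have a_close: "\<bar>a y + \<eta> $ k\<bar> \<le> s / (2 * D)" if "y \<in> ball x 2" for y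
    using mvt[OF that, of k] KJ by (simp add: a_def \<eta>_def grad_def J_def)
  have a_lower: "\<bar>a y\<bar> \<ge> s / (2 * D)" if "y \<in> ball x 2" for y
  proof -
    have "s / D \<le> \<bar>\<eta> $ k\<bar>" using sk D1 by (simp add: field_simps)
    moreover have "s / (2 * D) = s / D - s / (2 * D)" by (simp add: field_simps)
    ultimately show ?thesis using a_close[OF that] by linarith
  qed
  have a_upper: "\<bar>a y\<bar> \<le> 2 * s" if "y \<in> ball x 2" for y
  proof -
    have "s / (2 * D) \<le> s" using s0 D1 by (simp add: field_simps)
    then show ?thesis using a_close[OF that] etak by linarith
  qed
  define e :: "real^'n" where "e = axis k 1"
  define u where "u y = exp (2 * pi * \<i> * complex_of_real (\<mu> y - \<xi> \<bullet> y))" for y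
  define G where "G r y = cnj (pderivs (replicate r k) g (y - x))" for r y
  define B where "B r y = complex_of_real ((pderivs (replicate (Suc r) k) \<mu> y - (if r = 0 then \<xi> $ k else 0)) / s)" for r y
  have B0: "B 0 y = complex_of_real (a y / s)" for y by (simp add: B_def a_def)
  interpret ibp_setting u G B x e s
  proof
    show "((\<lambda>t. u (y + t *\<^sub>R e)) has_vector_derivative u y * (2 * pi * \<i> * of_real s * B 0 y)) (at 0)" for y
    proof -
      define \<phi> where "\<phi> t = \<mu> (y + t *\<^sub>R e) - \<xi> \<bullet> (y + t *\<^sub>R e)" for t
      have d1: "((\<lambda>t. \<mu> (y + t *\<^sub>R e)) has_real_derivative partial_deriv k \<mu> y) (at 0)"
        using line_deriv[OF smu, of "[]" y k] by (simp add: e_def has_real_derivative_iff_has_vector_derivative)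
      have "(\<lambda>t. \<xi> \<bullet> (y + t *\<^sub>R e)) = (\<lambda>t. \<xi> \<bullet> y + t * \<xi> $ k)"
        by (simp add: fun_eq_iff e_def inner_add_right inner_axis)
      moreover have "((\<lambda>t. \<xi> \<bullet> y + t * \<xi> $ k) has_real_derivative \<xi> $ k) (at 0)"
        by (auto intro!: derivative_eq_intros)
      ultimately have d2: "((\<lambda>t. \<xi> \<bullet> (y + t *\<^sub>R e)) has_real_derivative \<xi> $ k) (at 0)" by simp
      have d\<phi>: "(\<phi> has_real_derivative a y) (at 0)"
        unfolding \<phi>_def a_def using DERIV_diff[OF d1 d2] by simp
      have df: "((\<lambda>t. complex_of_real (\<phi> t)) has_vector_derivative complex_of_real (a y)) (at 0)"
        by (rule has_vector_derivative_of_real[OF d\<phi>])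
      have dg: "((\<lambda>z. exp (2 * pi * \<i> * z)) has_field_derivative exp (2 * pi * \<i> * complex_of_real (\<phi> 0)) * (2 * pi * \<i>)) (at (complex_of_real (\<phi> 0)))"
        by (auto intro!: derivative_eq_intros)
      have ch: "((\<lambda>z. exp (2 * pi * \<i> * z)) \<circ> (\<lambda>t. complex_of_real (\<phi> t)) has_vector_derivative
          complex_of_real (a y) * (exp (2 * pi * \<i> * complex_of_real (\<phi> 0)) * (2 * pi * \<i>))) (at 0)"
        by (rule field_vector_diff_chain_at[OF df dg])
      have eqf: "(\<lambda>t. u (y + t *\<^sub>R e)) = (\<lambda>z. exp (2 * pi * \<i> * z)) \<circ> (\<lambda>t. complex_of_real (\<phi> t))"
        by (simp add: fun_eq_iff u_def \<phi>_def)
      have "s \<noteq> 0" using s0 by simp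
      then have eqv: "complex_of_real (a y) * (exp (2 * pi * \<i> * complex_of_real (\<phi> 0)) * (2 * pi * \<i>))
          = u y * (2 * pi * \<i> * of_real s * B 0 y)"
        by (simp add: u_def \<phi>_def B0 field_simps)
      show ?thesis using ch unfolding eqf eqv .
    qed
    show "continuous_on UNIV u" unfolding u_def
      by (intro continuous_intros continuous_on_compose2[OF mu_cont]) auto
    show "((\<lambda>t. G r (y + t *\<^sub>R e)) has_vector_derivative G (Suc r) y) (at 0)" for r y
    proof -
      have "((\<lambda>t. pderivs (replicate r k) g ((y - x) + t *\<^sub>R e)) has_vector_derivative pderivs (k # replicate r k) g (y - x)) (at 0)"
        unfolding e_def by (rule line_deriv[OF sg])
      then have "((\<lambda>t. cnj (pderivs (replicate r k) g ((y - x) + t *\<^sub>R e))) has_vector_derivative cnj (pderivs (k # replicate r k) g (y - x))) (at 0)"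
        by (rule has_vector_derivative_cnj)
      moreover have "(\<lambda>t. G r (y + t *\<^sub>R e)) = (\<lambda>t. cnj (pderivs (replicate r k) g ((y - x) + t *\<^sub>R e)))"
        by (simp add: fun_eq_iff G_def algebra_simps)
      ultimately show ?thesis by (simp add: G_def)
    qed
    show "((\<lambda>t. B r (y + t *\<^sub>R e)) has_vector_derivative B (Suc r) y) (at 0)" for r y
    proof -
      have "((\<lambda>t. pderivs (replicate (Suc r) k) \<mu> (y + t *\<^sub>R e)) has_vector_derivative pderivs (k # replicate (Suc r) k) \<mu> y) (at 0)"
        unfolding e_def by (rule line_deriv[OF smu])
      then have "((\<lambda>t. pderivs (replicate (Suc r) k) \<mu> (y + t *\<^sub>R e)) has_real_derivative pderivs (k # replicate (Suc r) k) \<mu> y) (at 0)"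
        by (simp add: has_real_derivative_iff_has_vector_derivative)
      then have "((\<lambda>t. (pderivs (replicate (Suc r) k) \<mu> (y + t *\<^sub>R e) - (if r = 0 then \<xi> $ k else 0)) / s) has_real_derivative
           (pderivs (k # replicate (Suc r) k) \<mu> y - 0) / s) (at 0)"
        using s0 by (auto intro!: derivative_eq_intros)
      then have "((\<lambda>t. complex_of_real ((pderivs (replicate (Suc r) k) \<mu> (y + t *\<^sub>R e) - (if r = 0 then \<xi> $ k else 0)) / s)) has_vector_derivative
           complex_of_real ((pderivs (k # replicate (Suc r) k) \<mu> y - 0) / s)) (at 0)"
        by (rule has_vector_derivative_of_real)
      then show ?thesis by (simp add: B_def)
    qed
    show "continuous_on UNIV (G r)" for r
      unfolding G_def by (intro continuous_intros continuous_on_compose2[OF smooth_cont[OF sg]]) auto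
    show "continuous_on UNIV (B r)" for r
      using s0 unfolding B_def by (intro continuous_intros continuous_on_compose2[OF smooth_cont[OF smu]]) auto
    show "G r y = 0" if "y \<notin> cball x 1" for r y
      using that pderivs_zero[OF sg gsupp, of "y - x"] by (simp add: G_def dist_norm norm_minus_commute)
    show "B 0 y \<noteq> 0" if "y \<in> ball x 2" for y
    proof -
      have "s / (2 * D) > 0" using s0 D1 by simp
      then show ?thesis using a_lower[OF that] s0 by (auto simp: B0)
    qed
    show "s \<noteq> 0" using s0 by simp
  qed
  have "stft g (\<lambda>y. exp (2 * pi * \<i> * complex_of_real (\<mu> y))) x \<xi> = integral\<^sup>L lborel (\<lambda>y. u y * ev G B (Es 0) y)"
    unfolding stft_def
  proof (rule Bochner_Integration.integral_cong[OF refl])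
    fix y
    show "exp (- 2 * pi * \<i> * complex_of_real (\<xi> \<bullet> y)) * exp (2 * pi * \<i> * complex_of_real (\<mu> y)) * cnj (g (y - x))
        = u y * ev G B (Es 0) y"
    proof -
      have "exp (- 2 * pi * \<i> * complex_of_real (\<xi> \<bullet> y)) * exp (2 * pi * \<i> * complex_of_real (\<mu> y)) = u y"
        unfolding u_def mult_exp_exp by (simp add: algebra_simps)
      then show ?thesis by (simp add: G_def)
    qed
  qed
  also have "\<dots> = (1 / s) ^ j * integral\<^sup>L lborel (\<lambda>y. u y * ev G B (Es j) y)"
    by (rule iterate)
  finally have eq: "stft g (\<lambda>y. exp (2 * pi * \<i> * complex_of_real (\<mu> y))) x \<xi> = (1 / s) ^ j * integral\<^sup>L lborel (\<lambda>y. u y * ev G B (Es j) y)" .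
  have "norm (integral\<^sup>L lborel (\<lambda>y. u y * ev G B (Es j) y)) \<le> integral\<^sup>L lborel (\<lambda>y. norm (u y * ev G B (Es j) y))"
    by (rule integral_norm_bound)
  also have "\<dots> \<le> integral\<^sup>L lborel (\<lambda>y. bnd CG CB cc (Es j) * indicator (cball x 1) y)"
  proof (rule integral_mono)
    show "integrable lborel (\<lambda>y. norm (u y * ev G B (Es j) y))"
      by (rule integrable_norm[OF integrable_glob[OF hasG_Es]])
    show "integrable lborel (\<lambda>y. bnd CG CB cc (Es j) * indicator (cball x 1) y)"
      by (intro integrable_mult_right integrable_real_indicator) (use emeasure_compact_finite[of "cball x 1"] in \<open>auto simp: less_top\<close>)
    fix y :: "real^'n"
    show "norm (u y * ev G B (Es j) y) \<le> bnd CG CB cc (Es j) * indicator (cball x 1) y"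
    proof (cases "y \<in> cball x 1")
      case False
      then show ?thesis using ev_zero[OF hasG_Es False] by simp
    next
      case True
      then have yb: "y \<in> ball x 2" by auto
      have nu: "norm (u y) = 1" by (simp add: u_def)
      have "norm (ev G B (Es j) y) \<le> bnd CG CB cc (Es j)"
      proof (rule ev_bound)
        show "norm (G r y) \<le> CG r" for r
        proof -
          have "norm (G r y) \<le> Cgf (replicate r k)" by (simp add: G_def Cgf)
          also have "\<dots> \<le> CG r" unfolding CG_def
            by (rule member_le_sum) (auto intro: order_trans[OF norm_ge_zero Cgf])
          finally show ?thesis .
        qed
        show "cc > 0" unfolding cc_def using D1 by (simp add: D_def)
        show "norm (B 0 y) \<ge> cc"
        proof -
          have nB: "norm (B 0 y) = \<bar>a y\<bar> / s" using s0 by (simp only: B0 norm_of_real) simp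
          have "cc = (s / (2 * D)) / s" using s0 by (simp add: cc_def D_def)
          also have "\<dots> \<le> \<bar>a y\<bar> / s" using a_lower[OF yb] s0 by (intro divide_right_mono) auto
          finally show ?thesis using nB by simp
        qed
        show "norm (B r y) \<le> CB r" for r
        proof (cases r)
          case 0
          have nB: "norm (B 0 y) = \<bar>a y\<bar> / s" using s0 by (simp only: B0 norm_of_real) simp
          also have "\<dots> \<le> (2 * s) / s" using a_upper[OF yb] s0 by (intro divide_right_mono) auto
          finally show ?thesis using s0 by (simp add: CB_def 0)
        next
          case (Suc r')
          let ?js = "replicate (Suc r) k"
          have nB: "norm (B r y) = \<bar>pderivs ?js \<mu> y\<bar> / s"
            using s0 Suc by (simp add: B_def norm_divide)
          have jy: "japanese y \<le> 6 * japanese x"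
            using jap_shift[of y x] yb by (simp add: dist_norm norm_minus_commute)
          have "\<bar>pderivs ?js \<mu> y\<bar> \<le> Bf ?js * japanese y powr (m - real (length ?js))" by (rule Bf)
          also have "\<dots> \<le> Bf ?js * japanese y powr (m - 2)"
            using Suc jap_ge1[of y] by (intro mult_left_mono powr_mono Bf_nonneg) auto
          also have "\<dots> \<le> Bf ?js * (6 * japanese x) powr (m - 2)"
            using jy hm jap_pos[of y] by (intro mult_left_mono powr_mono2 Bf_nonneg) auto
          also have "\<dots> = Bf ?js * 6 powr (m - 2) * J"
            using jap_pos[of x] by (simp add: J_def powr_mult)
          also have "\<dots> \<le> Bf ?js * 6 powr (m - 2) * s"
            using Js by (intro mult_left_mono mult_nonneg_nonneg Bf_nonneg) auto
          finally have "\<bar>pderivs ?js \<mu> y\<bar> / s \<le> Bf ?js * 6 powr (m - 2)"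
            using s0 by (simp add: divide_le_eq)
          also have "\<dots> \<le> CB r"
            unfolding CB_def using Suc
            by (auto intro!: mult_right_mono member_le_sum Bf_nonneg)
          finally show ?thesis using nB by simp
        qed
      qed
      then show ?thesis using True nu by (simp add: norm_mult)
    qed
  qed
  also have "\<dots> = bnd CG CB cc (Es j) * vol"
  proof -
    have "integral\<^sup>L lborel (indicator (cball x 1) :: real^'n \<Rightarrow> real) = integral\<^sup>L lborel (\<lambda>y. indicator (cball x 1) (y + x) :: real)"
      by (rule lborel_integral_shift[symmetric]) (intro borel_measurable_indicator borel_closed, simp)
    also have "(\<lambda>y. indicator (cball x 1) (y + x) :: real) = indicator (cball 0 1)"
      by (auto simp: fun_eq_iff indicator_def dist_norm)
    finally show ?thesis by (simp add: vol_def)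
  qed
  finally have "norm (integral\<^sup>L lborel (\<lambda>y. u y * ev G B (Es j) y)) \<le> bnd CG CB cc (Es j) * vol" .
  moreover have "norm ((1 / complex_of_real s) ^ j) = (1 / s) ^ j"
    using s0 by (simp add: norm_power norm_divide)
  ultimately have "norm ((1 / complex_of_real s) ^ j * integral\<^sup>L lborel (\<lambda>y. u y * ev G B (Es j) y))
      \<le> (1 / s) ^ j * (bnd CG CB cc (Es j) * vol)"
    unfolding norm_mult by (metis mult_left_mono norm_ge_zero)
  then show ?thesis unfolding eq by (simp add: s_def \<eta>_def)
qed

end



lemma part1:
  fixes g :: "real^'n::finite \<Rightarrow> complex" and \<mu> :: "real^'n \<Rightarrow> real"
  assumes sg: "smooth_fun g"
  shows "norm (stft g (\<lambda>y. exp (2 * pi * \<i> * complex_of_real (\<mu> y))) x \<xi>) \<le> (LINT y|lborel. norm (g y))"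
proof -
  have "norm (stft g (\<lambda>y. exp (2 * pi * \<i> * complex_of_real (\<mu> y))) x \<xi>)
      \<le> (LINT y|lborel. norm (exp (- 2 * pi * \<i> * complex_of_real (\<xi> \<bullet> y)) * exp (2 * pi * \<i> * complex_of_real (\<mu> y)) * cnj (g (y - x))))"
    unfolding stft_def by (rule integral_norm_bound)
  also have "\<dots> = (LINT y|lborel. norm (g (y + (- x))))"
    by (rule Bochner_Integration.integral_cong) (auto simp: norm_mult norm_exp_eq_Re)
  also have "\<dots> = (LINT y|lborel. norm (g y))"
  proof (rule lborel_integral_shift)
    show "(\<lambda>y. norm (g y)) \<in> borel_measurable borel"
      using smooth_cont[OF sg, of "[]"] by (intro borel_measurable_continuous_onI continuous_intros) auto
  qed
  finally show ?thesis .
qed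

theorem proposition3p2:
  fixes m :: real and \<mu> :: "real^'n::finite \<Rightarrow> real" and g :: "real^'n \<Rightarrow> complex"
  assumes hm: "m \<ge> 2"
    and h\<mu>_smooth: "smooth_fun \<mu>"
    and h\<mu>_symb: "\<And>is. \<exists>B. \<forall>x. japanese x powr (real (length is) - m) * \<bar>pderivs is \<mu> x\<bar> \<le> B"
    and hg_smooth: "smooth_fun g"
    and hg_supp: "\<And>y. g y \<noteq> 0 \<Longrightarrow> norm y \<le> 1"
  shows "(\<forall>x \<xi>. norm (stft g (\<lambda>y. exp (2 * pi * \<i> * complex_of_real (\<mu> y))) x \<xi>)
              \<le> (LINT y|lborel. norm (g y)))
       \<and> (\<exists>A>0. \<forall>N\<ge>0. \<exists>C>0. \<forall>x \<xi>.
              norm (\<xi> - grad \<mu> x) \<ge> A * rpow (norm x) (m - 2) \<longrightarrow>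
              norm (stft g (\<lambda>y. exp (2 * pi * \<i> * complex_of_real (\<mu> y))) x \<xi>)
                \<le> C * japanese (\<xi> - grad \<mu> x) powr (- N))"
proof
  show P1: "\<forall>x \<xi>. norm (stft g (\<lambda>y. exp (2 * pi * \<i> * complex_of_real (\<mu> y))) x \<xi>)
              \<le> (LINT y|lborel. norm (g y))"
    using part1[OF hg_smooth] by blast
  obtain Bf where Bf0: "\<And>js x. japanese x powr (real (length js) - m) * \<bar>pderivs js \<mu> x\<bar> \<le> Bf js"
    using h\<mu>_symb by metis
  obtain Cgf where Cgf: "\<And>js y. norm (pderivs js g y) \<le> Cgf js"
    using pderivs_bounded[OF hg_smooth hg_supp] by metis
  interpret P: P32 m \<mu> g Bf Cgf
  proof
    show "\<bar>pderivs js \<mu> x\<bar> \<le> Bf js * japanese x powr (m - real (length js))" for js x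
      by (rule pderiv_bound_from[OF Bf0])
  qed (use hm h\<mu>_smooth hg_smooth hg_supp Cgf in auto)
  define Ig where "Ig = (LINT y|lborel. norm (g y))"
  have Ig0: "Ig \<ge> 0" unfolding Ig_def by (intro integral_nonneg_AE) auto
  define A where "A = P.L * 2 powr (m - 2) + 1"
  have L1: "P.L \<ge> 1" unfolding P.L_def using P.K_nonneg by simp
  have p2: "2 powr (m - 2) \<ge> 1" using hm by (intro ge_one_powr_ge_zero) auto
  have "1 * 1 \<le> P.L * 2 powr (m - 2)" by (rule mult_mono[OF L1 p2]) (use L1 in auto)
  then have A2: "A \<ge> 2" unfolding A_def by simp
  show "\<exists>A>0. \<forall>N\<ge>0. \<exists>C>0. \<forall>x \<xi>.
              norm (\<xi> - grad \<mu> x) \<ge> A * rpow (norm x) (m - 2) \<longrightarrow>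
              norm (stft g (\<lambda>y. exp (2 * pi * \<i> * complex_of_real (\<mu> y))) x \<xi>)
                \<le> C * japanese (\<xi> - grad \<mu> x) powr (- N)"
  proof (rule exI[of _ A], intro conjI allI impI)
    show "A > 0" using A2 by simp
    fix N :: real assume N0: "N \<ge> 0"
    define j where "j = nat \<lceil>N\<rceil>"
    define C1 where "C1 = max (bnd P.CG P.CB P.cc (Es j) * P.vol) 0"
    define C where "C = C1 * 2 powr N + Ig * (1 + A) powr N + 1"
    have C1: "C1 \<ge> 0" unfolding C1_def by simp
    show "\<exists>C>0. \<forall>x \<xi>.
              norm (\<xi> - grad \<mu> x) \<ge> A * rpow (norm x) (m - 2) \<longrightarrow>
              norm (stft g (\<lambda>y. exp (2 * pi * \<i> * complex_of_real (\<mu> y))) x \<xi>)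
                \<le> C * japanese (\<xi> - grad \<mu> x) powr (- N)"
    proof (rule exI[of _ C], intro conjI allI impI)
      show "C > 0" unfolding C_def using C1 Ig0 A2
        by (intro add_nonneg_pos add_nonneg_nonneg mult_nonneg_nonneg) auto
      fix x \<xi> :: "real^'n"
      assume hyp: "norm (\<xi> - grad \<mu> x) \<ge> A * rpow (norm x) (m - 2)"
      define s where "s = norm (\<xi> - grad \<mu> x)"
      define V where "V = norm (stft g (\<lambda>y. exp (2 * pi * \<i> * complex_of_real (\<mu> y))) x \<xi>)"
      define W where "W = japanese (\<xi> - grad \<mu> x) powr (- N)"
      have W0: "W > 0" unfolding W_def using jap_pos[of "\<xi> - grad \<mu> x"] by simp
      have js: "japanese (\<xi> - grad \<mu> x) \<le> 1 + s" unfolding s_def by (rule jap_le)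
      show "V \<le> C * W"
      proof (cases "s < A")
        case True
        have "V \<le> Ig" using P1 by (simp add: V_def Ig_def)
        also have "Ig = Ig * (1 + A) powr N * (1 + A) powr (- N)"
          using A2 by (simp add: powr_minus field_simps)
        also have "\<dots> \<le> Ig * (1 + A) powr N * W"
          unfolding W_def using js True A2 jap_pos N0
          by (intro mult_left_mono powr_mono2' mult_nonneg_nonneg Ig0) auto
        also have "\<dots> \<le> C * W"
          using W0 C1 by (intro mult_right_mono) (auto simp: C_def)
        finally show ?thesis .
      next
        case False
        then have sA: "s \<ge> A" by simp
        define J where "J = japanese x powr (m - 2)"
        have sLJ: "s \<ge> P.L * J"
        proof (cases "norm x \<ge> 1")
          case True
          then have "norm x \<noteq> 0" by auto
          then have r: "rpow (norm x) (m - 2) = norm x powr (m - 2)" by (simp add: rpow_def)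
          have "japanese x \<le> 2 * norm x" using jap_le[of x] True by simp
          then have "J \<le> (2 * norm x) powr (m - 2)" unfolding J_def using hm jap_pos[of x]
            by (intro powr_mono2) auto
          also have "\<dots> = 2 powr (m - 2) * norm x powr (m - 2)" by (simp add: powr_mult)
          finally have "P.L * J \<le> P.L * (2 powr (m - 2) * norm x powr (m - 2))"
            using L1 by (intro mult_left_mono) auto
          also have "\<dots> \<le> A * norm x powr (m - 2)"
            unfolding A_def by (simp add: algebra_simps)
          also have "\<dots> \<le> s" using hyp r by (simp add: s_def)
          finally show ?thesis .
        next
          case False
          have "japanese x \<le> 2" using jap_le[of x] False by simp
          then have "J \<le> 2 powr (m - 2)" unfolding J_def using hm jap_pos[of x]
            by (intro powr_mono2) auto
          then have "P.L * J \<le> P.L * 2 powr (m - 2)" using L1 by (intro mult_left_mono) auto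
          also have "\<dots> \<le> A" unfolding A_def by simp
          finally show ?thesis using sA by simp
        qed
        have s1: "s \<ge> 1" using sA A2 by simp
        have "V \<le> (1 / s) ^ j * (bnd P.CG P.CB P.cc (Es j) * P.vol)"
          unfolding V_def s_def
          by (rule P.main_est) (use sLJ s1 in \<open>auto simp: s_def J_def\<close>)
        also have "\<dots> \<le> (1 / s) ^ j * C1"
          unfolding C1_def using s1 by (intro mult_left_mono) auto
        finally have v1: "V \<le> (1 / s) ^ j * C1" .
        have e1: "(1 / s) ^ j = s powr (- real j)"
          using s1 by (simp add: powr_minus powr_realpow divide_inverse power_inverse)
        have e2: "s powr (- real j) \<le> s powr (- N)"
          using s1 N0 by (intro powr_mono) (auto simp: j_def)
        have e3: "s powr (- N) = 2 powr N * (2 * s) powr (- N)"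
          using s1 by (simp add: powr_mult powr_minus field_simps)
        have e4: "(2 * s) powr (- N) \<le> W"
          unfolding W_def using js s1 jap_pos N0
          by (intro powr_mono2') auto
        have "(1 / s) ^ j \<le> 2 powr N * W"
        proof -
          have "2 powr N * (2 * s) powr (- N) \<le> 2 powr N * W" by (rule mult_left_mono[OF e4]) simp
          then show ?thesis using e1 e2 e3 by linarith
        qed
        then have "V \<le> 2 powr N * W * C1"
          using v1 C1 by (meson mult_right_mono order_trans)
        also have "\<dots> = C1 * 2 powr N * W" by simp
        also have "\<dots> \<le> C * W"
          using W0 C1 Ig0 A2 by (intro mult_right_mono) (auto simp: C_def)
        finally show ?thesis .
      qed
    qed
  qed
qed



end
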